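(* Let $0<a_1<a_2<\cdots<a_n$ be task lengths, $A_i:=a_1+\cdots+a_i$, and for a permutation $\pi$ of $\{1,\dots,n\}$, $A_{\pi(i)}:=a_{\pi(1)}+\cdots+a_{\pi(i)}$. Let $\lambda(t)\ge0$ be the intensity of the disruption process and $p(t):=\lambda(t)e^{-\int_0^t\lambda(u)\,du}$. In the single-failure model, for every permutation $\pi$, $$R_{1:n}(0)-R_{\pi(1):\pi(n)}(0)=\sum_{i=1}^n\left(a_i\int_0^{A_i}p(s)\,ds-a_{\pi(i)}\int_0^{A_{\pi(i)}}p(s)\,ds\right).$$ Moreover: (i) if $p$ is strictly decreasing on $[0,A_n]$, then SPT is optimal, i.e. $R_{1:n}(0)<R_{\pi(1):\pi(n)}(0)$ for every $\pi\neq\mathrm{id}$; (ii) if $p$ is strictly increasing on $[0,A_n]$, then LPT is optimal, i.e. $R_{n:1}(0)<R_{\pi(1):\pi(n)}(0)$ for every $\pi$ with $(\pi(1),\dots,\pi(n))\ne(n,n-1,\dots,1)$.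
   Context: Single-failure model: a single machine processes tasks of lengths $a_{\pi(1)},\dots,a_{\pi(n)}$ in this order starting at time $0$; a task of length $c$ needs $c$ units of uninterrupted processing. At most one disruption occurs: its time $D$ is the first point of a non-homogeneous Poisson process with intensity $\lambda$ (so $D$ has density $p$ on $[0,\infty)$, and possibly $D=\infty$). If $D\ge A_{\pi(n)}$ the batch finishes at time $T=A_{\pi(n)}$; if $A_{\pi(i-1)}\le D<A_{\pi(i)}$ (with $A_{\pi(0)}=0$), the task $a_{\pi(i)}$ in progress is restarted from scratch at time $D$ and it and all remaining tasks are then processed without further disruption, so $T=D+a_{\pi(i)}+\cdots+a_{\pi(n)}$. $R_{\pi(1):\pi(n)}(0):=\mathbb E[T]$; $R_{1:n}$ is the identity order (SPT, increasing lengths) and $R_{n:1}$ the order $a_n,\dots,a_1$ (LPT, decreasing lengths). *)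

theory Defs
  imports "HOL-Analysis.Analysis"
begin

text \<open>Density of the first point D of a non-homogeneous Poisson process with
  intensity lam: p(t) = lam(t) * exp(- int_0^t lam).\<close>
definition pdens :: "(real \<Rightarrow> real) \<Rightarrow> real \<Rightarrow> real" where
  "pdens lam t = lam t * exp (- integral {0..t} lam)"

definition Apre :: "(nat \<Rightarrow> real) \<Rightarrow> (nat \<Rightarrow> nat) \<Rightarrow> nat \<Rightarrow> real" where
  "Apre a \<pi> i = (\<Sum>j=1..i. a (\<pi> j))"

text \<open>Completion time T of the batch (order pi, n tasks) when the disruption
  occurs at time s (finite, s >= 0). If A_{pi(i-1)} <= s < A_{pi(i)} the task in
  progress restarts at s: T = s + a_{pi(i)} + ... + a_{pi(n)}; if s >= A_{pi(n)},
  T = A_{pi(n)}.\<close>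
definition Tcompl :: "(nat \<Rightarrow> real) \<Rightarrow> (nat \<Rightarrow> nat) \<Rightarrow> nat \<Rightarrow> real \<Rightarrow> real" where
  "Tcompl a \<pi> n s =
     (\<Sum>i=1..n. (if Apre a \<pi> (i - 1) \<le> s \<and> s < Apre a \<pi> i
                 then s + (\<Sum>j=i..n. a (\<pi> j)) else 0))
     + (if Apre a \<pi> n \<le> s then Apre a \<pi> n else 0)"

text \<open>Expected completion time R_{pi(1):pi(n)}(0) = E[T]: D has density p on
  [0,infinity) and the remaining mass 1 - int_0^infinity p sits at D = infinity,
  where T = A_{pi(n)}.\<close>
definition Rexp :: "(nat \<Rightarrow> real) \<Rightarrow> (nat \<Rightarrow> nat) \<Rightarrow> nat \<Rightarrow> (real \<Rightarrow> real) \<Rightarrow> real" where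
  "Rexp a \<pi> n p =
     integral {0..} (\<lambda>s. Tcompl a \<pi> n s * p s)
     + Apre a \<pi> n * (1 - integral {0..} p)"

definition lpt :: "nat \<Rightarrow> nat \<Rightarrow> nat" where
  "lpt n i = (if i \<in> {1..n} then n + 1 - i else i)"

end

theory Submission
  imports Defs
begin


context
  fixes lam :: "real \<Rightarrow> real"
  assumes lam_nonneg: "\<forall>t\<ge>0. 0 \<le> lam t"
    and lam_int: "\<forall>t\<ge>0. lam integrable_on {0..t}"
begin

lemma Lam_diff: "0 \<le> r \<Longrightarrow> r \<le> t \<Longrightarrow> integral {r..t} lam = integral {0..t} lam - integral {0..r} lam"
  using Henstock_Kurzweil_Integration.integral_combine[where a=0 and c=r and b=t and f=lam] lam_int by auto

lemma lam_int_sub: "0 \<le> u \<Longrightarrow> lam integrable_on {u..v}"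
proof (cases "u \<le> v")
  case True
  assume "0 \<le> u"
  then show ?thesis using lam_int True
    by (metis atLeastatMost_subset_iff integrable_subinterval_real order.trans order_refl)
qed auto

lemma Lam_mono: "0 \<le> r \<Longrightarrow> r \<le> t \<Longrightarrow> integral {0..r} lam \<le> integral {0..t} lam"
  using Lam_diff[of r t] integral_nonneg[OF lam_int_sub[of r t], of ] lam_nonneg by force

lemma Lam_cont: "continuous_on {0..t} (\<lambda>t. integral {0..t} lam)"
proof (cases "0 \<le> t")
  case True
  then show ?thesis using indefinite_integral_continuous_1 lam_int by blast
qed auto

lemma Lam_cont': "0 \<le> u \<Longrightarrow> continuous_on {u..v} (\<lambda>t. integral {0..t} lam)"
  by (rule continuous_on_subset[OF Lam_cont[of v]]) auto

lemma int_prod: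
  assumes u: "0 \<le> u" and g: "continuous_on {u..v} g"
  shows "(\<lambda>s. g s * lam s) integrable_on {u..v}"
proof -
  have "lam absolutely_integrable_on {u..v}"
    by (rule nonnegative_absolutely_integrable_1[OF lam_int_sub[OF u]]) (use lam_nonneg u in auto)
  moreover have "g \<in> borel_measurable (lebesgue_on {u..v})"
    by (rule continuous_imp_measurable_on_sets_lebesgue[OF g]) auto
  moreover have "bounded (g ` {u..v})"
    by (rule compact_imp_bounded[OF compact_continuous_image[OF g]]) auto
  ultimately have "(\<lambda>s. g s * lam s) absolutely_integrable_on {u..v}"
    by (intro absolutely_integrable_bounded_measurable_product_real) auto
  then show ?thesis using absolutely_integrable_on_def by blast
qed

lemma P_int_gen:
  assumes u: "0 \<le> u" and g: "continuous_on {u..v} g"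
  shows "(\<lambda>s. g s * pdens lam s) integrable_on {u..v}"
proof -
  have "continuous_on {u..v} (\<lambda>s. g s * exp (- integral {0..s} lam))"
    by (intro continuous_intros g Lam_cont'[OF u])
  from int_prod[OF u this] show ?thesis
    by (simp add: pdens_def mult_ac)
qed

lemma P_int: "0 \<le> u \<Longrightarrow> pdens lam integrable_on {u..v}"
  using P_int_gen[of u v "\<lambda>_. 1"] by simp

lemma P_nonneg: "0 \<le> s \<Longrightarrow> 0 \<le> pdens lam s"
  using lam_nonneg by (simp add: pdens_def)

lemma P_bound1:
  assumes "0 \<le> r" "r \<le> t"
  shows "integral {r..t} (pdens lam) \<le> exp (- integral {0..r} lam) * (integral {0..t} lam - integral {0..r} lam)"
proof -
  have "integral {r..t} (pdens lam) \<le> integral {r..t} (\<lambda>s. exp (- integral {0..r} lam) * lam s)"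
  proof (rule integral_le)
    show "pdens lam integrable_on {r..t}" using P_int assms by auto
    show "(\<lambda>s. exp (- integral {0..r} lam) * lam s) integrable_on {r..t}"
      using lam_int_sub[of r t] assms by (simp add: integrable_on_cmult_left)
    fix s assume s: "s \<in> {r..t}"
    then have "integral {0..r} lam \<le> integral {0..s} lam" using Lam_mono assms by auto
    then show "pdens lam s \<le> exp (- integral {0..r} lam) * lam s"
      unfolding pdens_def using lam_nonneg s assms
      by (simp add: mult_left_mono mult.commute)
  qed
  also have "\<dots> = exp (- integral {0..r} lam) * (integral {0..t} lam - integral {0..r} lam)"
    using Lam_diff[OF assms] by simp
  finally show ?thesis .
qed

lemma P_bound_K:
  "\<forall>r t. 0 \<le> r \<and> r \<le> t \<and> integral {0..t} lam - integral {0..r} lam \<le> real K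
     \<longrightarrow> integral {r..t} (pdens lam) \<le> 2 * exp (- integral {0..r} lam)"
proof (induction K)
  case 0
  show ?case
  proof (intro allI impI)
    fix r t :: real assume h: "0 \<le> r \<and> r \<le> t \<and> integral {0..t} lam - integral {0..r} lam \<le> real 0"
    have "exp (- integral {0..r} lam) * (integral {0..t} lam - integral {0..r} lam) \<le> 0"
      by (rule mult_nonneg_nonpos) (use h in auto)
    then have "integral {r..t} (pdens lam) \<le> 0" using P_bound1[of r t] h by linarith
    then show "integral {r..t} (pdens lam) \<le> 2 * exp (- integral {0..r} lam)"
      using exp_gt_zero[of "- integral {0..r} lam"] by linarith
  qed
next
  case (Suc K)
  show ?case
  proof (intro allI impI)
    fix r t :: real assume h: "0 \<le> r \<and> r \<le> t \<and> integral {0..t} lam - integral {0..r} lam \<le> real (Suc K)"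
    show "integral {r..t} (pdens lam) \<le> 2 * exp (- integral {0..r} lam)"
    proof (cases "integral {0..t} lam - integral {0..r} lam \<le> 1")
      case True
      have "exp (- integral {0..r} lam) * (integral {0..t} lam - integral {0..r} lam) \<le> exp (- integral {0..r} lam) * 1"
        by (rule mult_left_mono) (use True in auto)
      then show ?thesis using P_bound1[of r t] h exp_gt_zero[of "- integral {0..r} lam"] by linarith
    next
      case False
      obtain m where m: "r \<le> m" "m \<le> t" "integral {0..m} lam = integral {0..r} lam + 1"
        using IVT'[of "\<lambda>t. integral {0..t} lam" r "integral {0..r} lam + 1" t] False h Lam_cont'[of r t]
        by auto
      have i1: "integral {r..m} (pdens lam) \<le> exp (- integral {0..r} lam)"
        using P_bound1[of r m] m h by simp
      have i2: "integral {m..t} (pdens lam) \<le> 2 * exp (- integral {0..m} lam)"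
      proof -
        have "0 \<le> m \<and> m \<le> t \<and> integral {0..t} lam - integral {0..m} lam \<le> real K"
          using m h by auto
        then show ?thesis using Suc.IH by blast
      qed
      have e: "2 * exp (- integral {0..m} lam) \<le> exp (- integral {0..r} lam)"
      proof -
        have "2 \<le> exp (1::real)" using exp_ge_add_one_self[of 1] by simp
        then have "2 * exp (- integral {0..r} lam - 1) \<le> exp 1 * exp (- integral {0..r} lam - 1)"
          by simp
        also have "\<dots> = exp (- integral {0..r} lam)" by (simp add: exp_add[symmetric])
        finally show ?thesis using m by simp
      qed
      have "integral {r..t} (pdens lam) = integral {r..m} (pdens lam) + integral {m..t} (pdens lam)"
        using Henstock_Kurzweil_Integration.integral_combine[where a=r and c=m and b=t and f="pdens lam"] P_int[of r t] m h by simp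
      then show ?thesis using i1 i2 e by simp
    qed
  qed
qed

lemma P_bound: "0 \<le> t \<Longrightarrow> integral {0..t} (pdens lam) \<le> 2"
proof -
  assume t: "0 \<le> t"
  obtain K :: nat where "integral {0..t} lam \<le> real K" using real_arch_simple by blast
  then show ?thesis using P_bound_K[of K] t by force
qed

lemma P_int_inf: "pdens lam integrable_on {0..}"
proof -
  define f where "f \<equiv> \<lambda>n x. if x \<in> {0..real n} then pdens lam x else 0"
  have hf: "(f n has_integral (integral {0..real n} (pdens lam))) {0..}" for n
    unfolding f_def by (subst has_integral_restrict) (auto intro: P_int)
  have "pdens lam integrable_on {0..} \<and> (\<lambda>k. integral {0..} (f k)) \<longlonglongrightarrow> integral {0..} (pdens lam)"
  proof (rule monotone_convergence_increasing)
    show "f k integrable_on {0..}" for k using hf by blast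
    show "f k x \<le> f (Suc k) x" if "x \<in> {0..}" for k x
      using that P_nonneg by (auto simp: f_def)
    show "(\<lambda>k. f k x) \<longlonglongrightarrow> pdens lam x" if "x \<in> {0..}" for x
    proof -
      obtain N :: nat where "x \<le> real N" using real_arch_simple by blast
      then have "\<forall>k\<ge>N. f k x = pdens lam x" using that by (auto simp: f_def)
      then show ?thesis by (intro tendsto_eventually) (auto simp: eventually_sequentially)
    qed
    have "integral {0..} (f k) = integral {0..real k} (pdens lam)" for k using hf by blast
    moreover have "0 \<le> integral {0..real k} (pdens lam)" for k
      by (rule integral_nonneg[OF P_int]) (auto intro: P_nonneg)
    ultimately have "\<bar>integral {0..} (f k)\<bar> \<le> 2" for k
      using P_bound[of "real k"] by (simp add: abs_le_iff)
    then show "bounded (range (\<lambda>k. integral {0..} (f k)))"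
      unfolding bounded_iff by auto
  qed
  then show ?thesis by blast
qed

end


lemma telesc: "(\<Sum>i=1..(n::nat). f i - f (i - 1)) = f n - (f 0 :: real)"
  by (induction n) auto

lemma sbp: "(\<Sum>i=1..(n::nat). g (i - 1) * (f i - f (i - 1))) =
   g n * f n - g 0 * (f 0 :: real) - (\<Sum>i=1..n. (g i - g (i - 1)) * f i)"
  by (induction n) (auto simp: algebra_simps)

lemma icm: "f integrable_on S \<Longrightarrow> (\<lambda>x. (c::real) * f x) integrable_on S"
  using integrable_on_cmult_left[of f S c] by simp

lemma Apre_0[simp]: "Apre a \<pi> 0 = 0" by (simp add: Apre_def)
lemma Apre_Suc: "Apre a \<pi> (Suc i) = Apre a \<pi> i + a (\<pi> (Suc i))" by (simp add: Apre_def)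

lemma Apre_diff: "1 \<le> i \<Longrightarrow> Apre a \<pi> i - Apre a \<pi> (i - 1) = a (\<pi> i)"
  using Apre_Suc[of a \<pi> "i - 1"] by simp

context
  fixes a :: "nat \<Rightarrow> real" and n :: nat and \<pi> :: "nat \<Rightarrow> nat"
  assumes apos: "\<forall>i\<in>{1..n}. 0 < a i" and perm: "\<pi> permutes {1..n}"
begin

lemma api: "1 \<le> i \<Longrightarrow> i \<le> n \<Longrightarrow> 0 < a (\<pi> i)"
  using apos permutes_in_image[OF perm] by auto

lemma Apre_mono: "i \<le> j \<Longrightarrow> j \<le> n \<Longrightarrow> Apre a \<pi> i \<le> Apre a \<pi> j"
proof (induction j rule: dec_induct)
  case (step m)
  then show ?case using Apre_Suc[of a \<pi> m] api[of "Suc m"] by simp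
qed simp

lemma Apre_nonneg: "i \<le> n \<Longrightarrow> 0 \<le> Apre a \<pi> i"
  using Apre_mono[of 0 i] by simp

lemma Apre_n: "Apre a \<pi> n = Apre a id n"
  unfolding Apre_def using sum.permute[OF perm, of a] by (simp add: comp_def)

lemma tail_sum: "1 \<le> i \<Longrightarrow> i \<le> n \<Longrightarrow> (\<Sum>j=i..n. a (\<pi> j)) = Apre a \<pi> n - Apre a \<pi> (i - 1)"
proof -
  assume i: "1 \<le> i" "i \<le> n"
  have "Apre a \<pi> ((i - 1) + (n - (i - 1))) = Apre a \<pi> (i - 1) + (\<Sum>j=(i - 1) + 1..(i - 1) + (n - (i - 1)). a (\<pi> j))"
    unfolding Apre_def by (rule sum.ub_add_nat) simp
  then show ?thesis using i by simp
qed

end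

lemma restrict_half:
  fixes f :: "real \<Rightarrow> real"
  assumes "0 \<le> u" "u \<le> v" "f integrable_on {u..v}"
  shows "((\<lambda>s. if u \<le> s \<and> s < v then f s else 0) has_integral integral {u..v} f) {0..}"
proof -
  have h: "((\<lambda>s. if s \<in> {u..v} then f s else 0) has_integral integral {u..v} f) {0..}"
    using assms by (subst has_integral_restrict) auto
  show ?thesis
    by (rule has_integral_spike[OF negligible_sing[of v] _ h]) auto
qed

lemma Rexp_formula:
  fixes p :: "real \<Rightarrow> real"
  assumes apos: "\<forall>i\<in>{1..n}. 0 < a i" and perm: "\<pi> permutes {1..n}"
    and pinf: "p integrable_on {0..}"
    and pint: "\<And>u v. 0 \<le> u \<Longrightarrow> p integrable_on {u..v}"
    and spint: "\<And>u v. 0 \<le> u \<Longrightarrow> (\<lambda>s. s * p s) integrable_on {u..v}"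
  shows "Rexp a \<pi> n p = integral {0..Apre a id n} (\<lambda>s. s * p s) + Apre a id n
      - Apre a id n * integral {0..Apre a id n} p
      + (\<Sum>i=1..n. a (\<pi> i) * integral {0..Apre a \<pi> i} p)"
proof -
  define B where "B = Apre a \<pi>"
  define An where "An = Apre a id n"
  define F where "F x = integral {0..x} p" for x
  define H where "H x = integral {0..x} (\<lambda>s. s * p s)" for x
  define Iinf where "Iinf = integral {0..} p"
  have BAn: "B n = An" unfolding B_def An_def using Apre_n[OF apos perm] .
  have B0: "B 0 = 0" by (simp add: B_def)
  have Bmono: "B (i - 1) \<le> B i" "0 \<le> B (i - 1)" if "1 \<le> i" "i \<le> n" for i
    using Apre_mono[OF apos perm, of "i - 1" i] Apre_nonneg[OF apos perm, of "i - 1"] that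
    by (auto simp: B_def)
  have An0: "0 \<le> An" using Apre_nonneg[OF apos perm, of n] BAn by (simp add: B_def)
  define c where "c i = (\<Sum>j=i..n. a (\<pi> j))" for i
  have c_eq: "c i = An - B (i - 1)" if "1 \<le> i" "i \<le> n" for i
    using tail_sum[OF apos perm that] BAn by (simp add: c_def B_def)
  have pc_int: "(\<lambda>s. (s + c i) * p s) integrable_on {u..v}" if "0 \<le> u" for u v i
  proof -
    have "(\<lambda>s. s * p s + c i * p s) integrable_on {u..v}"
      using spint[OF that] pint[OF that] by (intro integrable_add icm) auto
    then show ?thesis by (simp add: distrib_right)
  qed
  have expand: "Tcompl a \<pi> n s * p s =
      (\<Sum>i=1..n. (if B (i - 1) \<le> s \<and> s < B i then (s + c i) * p s else 0))
      + (if An \<le> s then An * p s else 0)" for s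
    unfolding Tcompl_def B_def[symmetric] c_def[symmetric] BAn
    by (auto simp: distrib_right sum_distrib_right intro!: sum.cong)
  have hi: "((\<lambda>s. if B (i - 1) \<le> s \<and> s < B i then (s + c i) * p s else 0)
            has_integral integral {B (i - 1)..B i} (\<lambda>s. (s + c i) * p s)) {0..}"
    if "i \<in> {1..n}" for i
    using restrict_half[of "B (i - 1)" "B i" "\<lambda>s. (s + c i) * p s"] Bmono[of i] pc_int[of "B (i - 1)" i "B i"] that by auto
  have hlast: "((\<lambda>s. if An \<le> s then An * p s else 0) has_integral An * (Iinf - F An)) {0..}"
  proof -
    have h1: "((\<lambda>s. An * p s) has_integral An * Iinf) {0..}"
      unfolding Iinf_def by (intro has_integral_mult_right integrable_integral pinf)
    have h2: "((\<lambda>s. if s \<in> {0..An} then An * p s else 0) has_integral An * F An) {0..}"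
      unfolding F_def using An0 pint[of 0 An]
      by (subst has_integral_restrict) (auto intro!: has_integral_mult_right integrable_integral)
    have h: "((\<lambda>s. An * p s - (if s \<in> {0..An} then An * p s else 0)) has_integral An * Iinf - An * F An) {0..}"
      by (rule has_integral_diff[OF h1 h2])
    have "((\<lambda>s. if An \<le> s then An * p s else 0) has_integral An * Iinf - An * F An) {0..}"
      by (rule has_integral_spike[OF negligible_sing[of An] _ h]) (auto simp: algebra_simps)
    then show ?thesis by (simp add: right_diff_distrib)
  qed
  have "((\<lambda>s. Tcompl a \<pi> n s * p s) has_integral
          (\<Sum>i=1..n. integral {B (i - 1)..B i} (\<lambda>s. (s + c i) * p s)) + An * (Iinf - F An)) {0..}"
    unfolding expand by (intro has_integral_add has_integral_sum hi hlast) auto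
  then have I: "integral {0..} (\<lambda>s. Tcompl a \<pi> n s * p s) =
          (\<Sum>i=1..n. integral {B (i - 1)..B i} (\<lambda>s. (s + c i) * p s)) + An * (Iinf - F An)"
    by blast
  have comb: "integral {u..v} g = integral {0..v} g - integral {0..u} g"
    if "0 \<le> u" "u \<le> v" "g integrable_on {0..v}" for u v and g :: "real \<Rightarrow> real"
    using Henstock_Kurzweil_Integration.integral_combine[where a=0 and c=u and b=v and f=g] that by simp
  have piece: "integral {B (i - 1)..B i} (\<lambda>s. (s + c i) * p s)
     = (H (B i) - H (B (i - 1))) + (An - B (i - 1)) * (F (B i) - F (B (i - 1)))"
    if i: "i \<in> {1..n}" for i
  proof -
    have "integral {B (i - 1)..B i} (\<lambda>s. (s + c i) * p s)
        = integral {B (i - 1)..B i} (\<lambda>s. s * p s + c i * p s)"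
      by (simp add: distrib_right)
    also have "\<dots> = integral {B (i - 1)..B i} (\<lambda>s. s * p s) + c i * integral {B (i - 1)..B i} p"
      using spint pint Bmono i by (subst integral_add) (auto intro: icm)
    also have "\<dots> = (H (B i) - H (B (i - 1))) + c i * (F (B i) - F (B (i - 1)))"
      unfolding H_def F_def using Bmono[of i] i
      by (subst (1 2) comb) (auto intro: spint pint)
    finally show ?thesis using c_eq[of i] i by simp
  qed
  have S1: "(\<Sum>i=1..n. H (B i) - H (B (i - 1))) = H An"
    using telesc[of "\<lambda>i. H (B i)" n] BAn B0 by (simp add: H_def)
  have S2: "(\<Sum>i=1..n. (An - B (i - 1)) * (F (B i) - F (B (i - 1))))
      = An * F An - (An * F An - (\<Sum>i=1..n. a (\<pi> i) * F (B i)))"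
  proof -
    have "(\<Sum>i=1..n. (An - B (i - 1)) * (F (B i) - F (B (i - 1))))
        = An * (\<Sum>i=1..n. (F (B i) - F (B (i - 1)))) - (\<Sum>i=1..n. B (i - 1) * (F (B i) - F (B (i - 1))))"
      unfolding sum_distrib_left sum_subtractf[symmetric] by (rule sum.cong) (auto simp: algebra_simps)
    also have "(\<Sum>i=1..n. (F (B i) - F (B (i - 1)))) = F An"
      using telesc[of "\<lambda>i. F (B i)" n] BAn B0 by (simp add: F_def)
    also have "(\<Sum>i=1..n. B (i - 1) * (F (B i) - F (B (i - 1)))) = An * F An - (\<Sum>i=1..n. a (\<pi> i) * F (B i))"
      using sbp[of B "\<lambda>i. F (B i)" n] BAn B0 Apre_diff[of _ a \<pi>]
      by (auto simp: B_def intro!: sum.cong)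
    finally show ?thesis .
  qed
  have "Rexp a \<pi> n p = integral {0..} (\<lambda>s. Tcompl a \<pi> n s * p s) + An * (1 - Iinf)"
    unfolding Rexp_def Iinf_def An_def using Apre_n[OF apos perm] by simp
  also have "\<dots> = H An + An - An * F An + (\<Sum>i=1..n. a (\<pi> i) * F (B i))"
  proof -
    have Isum: "(\<Sum>i=1..n. integral {B (i - 1)..B i} (\<lambda>s. (s + c i) * p s)) = (\<Sum>i=1..n. H (B i) - H (B (i - 1))) + (\<Sum>i=1..n. (An - B (i - 1)) * (F (B i) - F (B (i - 1))))"
      unfolding sum.distrib[symmetric] by (rule sum.cong[OF refl piece])
    show ?thesis unfolding I Isum S1 S2 by (simp add: algebra_simps)
  qed
  finally show ?thesis by (simp add: H_def F_def An_def B_def)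
qed



definition Sf :: "(nat \<Rightarrow> real) \<Rightarrow> (nat \<Rightarrow> nat) \<Rightarrow> nat \<Rightarrow> (real \<Rightarrow> real) \<Rightarrow> real" where
  "Sf a \<pi> n F = (\<Sum>i=1..n. a (\<pi> i) * F (Apre a \<pi> i))"

lemma split2:
  fixes h :: "nat \<Rightarrow> 'b::comm_monoid_add"
  assumes "1 \<le> i" "i < n"
  shows "(\<Sum>j=1..n. h j) = h i + h (Suc i) + (\<Sum>j\<in>{1..n} - {i, Suc i}. h j)"
proof -
  have "(\<Sum>j=1..n. h j) = h i + (\<Sum>j\<in>{1..n} - {i}. h j)"
    using assms by (subst sum.remove[of _ i]) auto
  also have "(\<Sum>j\<in>{1..n} - {i}. h j) = h (Suc i) + (\<Sum>j\<in>{1..n} - {i} - {Suc i}. h j)"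
    using assms by (subst sum.remove[of _ "Suc i"]) auto
  also have "{1..n} - {i} - {Suc i} = {1..n} - {i, Suc i}" by auto
  finally show ?thesis by (simp add: add.assoc)
qed

lemma Apre_cong: "(\<And>k. 1 \<le> k \<Longrightarrow> k \<le> j \<Longrightarrow> \<pi>' k = \<pi> k) \<Longrightarrow> Apre a \<pi>' j = Apre a \<pi> j"
  unfolding Apre_def by (rule sum.cong) auto

context
  fixes a :: "nat \<Rightarrow> real" and n :: nat and \<pi> :: "nat \<Rightarrow> nat" and i :: nat
  assumes i: "1 \<le> i" "i < n"
begin

definition "sw = \<pi> \<circ> Transposition.transpose i (Suc i)"

lemma sw_i: "sw i = \<pi> (Suc i)" and sw_Si: "sw (Suc i) = \<pi> i"
  and sw_o: "j \<noteq> i \<Longrightarrow> j \<noteq> Suc i \<Longrightarrow> sw j = \<pi> j"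
  by (auto simp: sw_def)

lemma Apre_sw_lt: "j < i \<Longrightarrow> Apre a sw j = Apre a \<pi> j"
  by (rule Apre_cong) (auto simp: sw_o)

lemma Apre_sw_i: "Apre a sw i = Apre a \<pi> (i - 1) + a (\<pi> (Suc i))"
  using Apre_Suc[of a sw "i - 1"] Apre_sw_lt[of "i - 1"] i sw_i by simp

lemma Apre_sw_ge: "Suc i \<le> j \<Longrightarrow> Apre a sw j = Apre a \<pi> j"
proof (induction j rule: dec_induct)
  case base
  have "Apre a sw (Suc i) = Apre a sw i + a (\<pi> i)" using Apre_Suc[of a sw i] sw_Si by simp
  moreover have "Apre a \<pi> (Suc i) = Apre a \<pi> (i - 1) + a (\<pi> i) + a (\<pi> (Suc i))"
    using Apre_Suc[of a \<pi> i] Apre_Suc[of a \<pi> "i - 1"] i by simp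
  ultimately show ?case using Apre_sw_i by simp
next
  case (step m)
  then show ?case using Apre_Suc[of a sw m] Apre_Suc[of a \<pi> m] sw_o[of "Suc m"] by simp
qed

lemma Sf_sw: "Sf a sw n F - Sf a \<pi> n F =
   a (\<pi> (Suc i)) * F (Apre a \<pi> (i - 1) + a (\<pi> (Suc i))) + a (\<pi> i) * F (Apre a \<pi> (Suc i))
   - a (\<pi> i) * F (Apre a \<pi> i) - a (\<pi> (Suc i)) * F (Apre a \<pi> (Suc i))"
proof -
  have r: "(\<Sum>j\<in>{1..n} - {i, Suc i}. a (sw j) * F (Apre a sw j)) = (\<Sum>j\<in>{1..n} - {i, Suc i}. a (\<pi> j) * F (Apre a \<pi> j))"
  proof (rule sum.cong)
    fix j assume "j \<in> {1..n} - {i, Suc i}"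
    then have "j < i \<or> Suc i \<le> j" "j \<noteq> i" "j \<noteq> Suc i" by auto
    then show "a (sw j) * F (Apre a sw j) = a (\<pi> j) * F (Apre a \<pi> j)"
      using Apre_sw_lt Apre_sw_ge sw_o by auto
  qed simp
  show ?thesis unfolding Sf_def split2[OF i, of "\<lambda>j. a (sw j) * F (Apre a sw j)"]
      split2[OF i, of "\<lambda>j. a (\<pi> j) * F (Apre a \<pi> j)"] r
    using sw_i sw_Si Apre_sw_i Apre_sw_ge[of "Suc i"] by simp
qed

lemma sw_perm: "\<pi> permutes {1..n} \<Longrightarrow> sw permutes {1..n}"
  unfolding sw_def using i by (intro permutes_compose permutes_swap_id) auto

lemma mu_sw: "(\<Sum>j=1..n. j * sw j) + i * \<pi> i + Suc i * \<pi> (Suc i) = (\<Sum>j=1..n. j * \<pi> j) + i * \<pi> (Suc i) + Suc i * \<pi> i"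
proof -
  have r: "(\<Sum>j\<in>{1..n} - {i, Suc i}. j * sw j) = (\<Sum>j\<in>{1..n} - {i, Suc i}. j * \<pi> j)"
    by (rule sum.cong) (auto simp: sw_o)
  show ?thesis unfolding split2[OF i, of "\<lambda>j. j * sw j"] split2[OF i, of "\<lambda>j. j * \<pi> j"] r
    using sw_i sw_Si by simp
qed

end

lemma descent:
  fixes S :: "(nat \<Rightarrow> nat) \<Rightarrow> real" and m :: "(nat \<Rightarrow> nat) \<Rightarrow> nat"
  assumes step: "\<And>\<pi>. \<pi> permutes A \<Longrightarrow> \<pi> \<noteq> \<sigma> \<Longrightarrow> \<exists>\<pi>'. \<pi>' permutes A \<and> m \<pi>' < m \<pi> \<and> S \<pi>' < S \<pi>"
  shows "\<pi> permutes A \<Longrightarrow> \<pi> \<noteq> \<sigma> \<Longrightarrow> S \<sigma> < S \<pi>"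
proof (induction "m \<pi>" arbitrary: \<pi> rule: less_induct)
  case less
  obtain \<pi>' where h: "\<pi>' permutes A" "m \<pi>' < m \<pi>" "S \<pi>' < S \<pi>" using step less.prems by blast
  show ?case
  proof (cases "\<pi>' = \<sigma>")
    case True then show ?thesis using h by simp
  next
    case False then show ?thesis using less.hyps[OF h(2) h(1) False] h(3) by simp
  qed
qed

lemma ascending_id:
  assumes perm: "\<pi> permutes {1..n}" and asc: "\<And>i. 1 \<le> i \<Longrightarrow> i < n \<Longrightarrow> \<pi> i < \<pi> (Suc i)"
  shows "\<pi> = id"
proof -
  have inr: "1 \<le> \<pi> j \<and> \<pi> j \<le> n" if "1 \<le> j" "j \<le> n" for j
    using permutes_in_image[OF perm] that by auto
  have up: "1 \<le> j \<longrightarrow> j \<le> n \<longrightarrow> j \<le> \<pi> j" for j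
  proof (induction j)
    case (Suc j)
    show ?case
    proof (cases "j = 0")
      case True then show ?thesis using inr[of 1] by auto
    next
      case False then show ?thesis using Suc asc[of j] by auto
    qed
  qed simp
  have down: "k < n \<longrightarrow> \<pi> (n - k) \<le> n - k" for k
  proof (induction k)
    case 0 then show ?case using inr[of n] by auto
  next
    case (Suc k)
    show ?case
    proof
      assume k: "Suc k < n"
      have "Suc (n - Suc k) = n - k" using k by simp
      have j: "1 \<le> n - Suc k" "n - Suc k < n" using k by auto
      have "\<pi> (n - Suc k) < \<pi> (Suc (n - Suc k))" using asc[OF j] .
      then have "\<pi> (n - Suc k) < \<pi> (n - k)" using \<open>Suc (n - Suc k) = n - k\<close> by simp
      then show "\<pi> (n - Suc k) \<le> n - Suc k" using Suc k by linarith
    qed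
  qed
  show ?thesis
  proof
    fix j
    show "\<pi> j = id j"
    proof (cases "j \<in> {1..n}")
      case True
      then have "\<pi> (n - (n - j)) \<le> n - (n - j)" using down[of "n - j"] by auto
      then show ?thesis using True up[of j] by auto
    next
      case False then show ?thesis using permutes_not_in[OF perm] by auto
    qed
  qed
qed

lemma lpt_invol: "lpt n (lpt n x) = x"
  by (auto simp: lpt_def)

lemma lpt_perm: "lpt n permutes {1..n}"
proof (rule bij_imp_permutes)
  show "bij_betw (lpt n) {1..n} {1..n}"
    by (rule bij_betwI[where g="lpt n"]) (auto simp: lpt_def)
qed (auto simp: lpt_def)

lemma descending_lpt:
  assumes perm: "\<pi> permutes {1..n}" and desc: "\<And>i. 1 \<le> i \<Longrightarrow> i < n \<Longrightarrow> \<pi> (Suc i) < \<pi> i"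
  shows "\<pi> = lpt n"
proof -
  have "lpt n \<circ> \<pi> = id"
  proof (rule ascending_id)
    show "lpt n \<circ> \<pi> permutes {1..n}" by (rule permutes_compose[OF perm lpt_perm])
    fix i assume "1 \<le> i" "i < n"
    then show "(lpt n \<circ> \<pi>) i < (lpt n \<circ> \<pi>) (Suc i)"
      using desc[of i] permutes_in_image[OF perm, of i] permutes_in_image[OF perm, of "Suc i"]
      by (auto simp: lpt_def)
  qed
  then have "\<pi> x = lpt n x" for x using lpt_invol[of n "\<pi> x"] by (metis comp_apply id_apply)
  then show ?thesis by auto
qed

lemma avg:
  fixes f :: "real \<Rightarrow> real"
  assumes "u < v" "v < w" and fi: "f integrable_on {u..w}"
    and dec: "\<forall>x\<in>{u..w}. \<forall>y\<in>{u..w}. x < y \<longrightarrow> f y < f x"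
  shows "(w - u) * integral {v..w} f < (w - v) * integral {u..w} f"
proof -
  define m where "m = (u + v) / 2"
  have m: "u < m" "m < v" using assms by (auto simp: m_def)
  have int: "f integrable_on {c..d}" if "u \<le> c" "d \<le> w" for c d
    using integrable_subinterval_real[OF fi] that by (cases "c \<le> d") auto
  have I2: "integral {v..w} f \<le> (w - v) * f v"
  proof -
    have "integral {v..w} f \<le> integral {v..w} (\<lambda>_. f v)"
      by (rule integral_le) (use int assms dec in \<open>auto simp: less_eq_real_def\<close>)
    then show ?thesis using assms by simp
  qed
  have Ia: "(m - u) * f m \<le> integral {u..m} f"
  proof -
    have "integral {u..m} (\<lambda>_. f m) \<le> integral {u..m} f"
      by (rule integral_le) (use int assms m dec in \<open>auto simp: less_eq_real_def\<close>)
    then show ?thesis using m by simp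
  qed
  have Ib: "(v - m) * f v \<le> integral {m..v} f"
  proof -
    have "integral {m..v} (\<lambda>_. f v) \<le> integral {m..v} f"
      by (rule integral_le) (use int assms m dec in \<open>auto simp: less_eq_real_def\<close>)
    then show ?thesis using m by simp
  qed
  have fmv: "f v < f m" using dec m assms by auto
  have c1: "integral {u..v} f = integral {u..m} f + integral {m..v} f"
    using Henstock_Kurzweil_Integration.integral_combine[where a=u and c=m and b=v and f=f] m int[of u v] assms by simp
  have c2: "integral {u..w} f = integral {u..v} f + integral {v..w} f"
    using Henstock_Kurzweil_Integration.integral_combine[where a=u and c=v and b=w and f=f] fi assms by simp
  have I1: "(v - u) * f v < integral {u..v} f"
  proof -
    have "(m - u) * f v < (m - u) * f m" using fmv m by simp
    then show ?thesis using c1 Ia Ib by (simp add: algebra_simps)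
  qed
  have "(v - u) * integral {v..w} f \<le> (v - u) * ((w - v) * f v)"
    using I2 assms by (intro mult_left_mono) auto
  also have "\<dots> = (w - v) * ((v - u) * f v)" by simp
  also have "\<dots> < (w - v) * integral {u..v} f" using I1 assms by simp
  finally have "(v - u) * integral {v..w} f < (w - v) * integral {u..v} f" .
  then show ?thesis unfolding c2 by (simp add: algebra_simps)
qed



lemma a_mono:
  assumes aincr: "\<forall>i\<in>{1..<n}. a i < a (Suc i)"
  shows "1 \<le> j \<Longrightarrow> j < k \<Longrightarrow> k \<le> n \<Longrightarrow> (a::nat\<Rightarrow>real) j < a k"
proof (induction k rule: less_induct)
  case (less k)
  show ?case
  proof (cases "k = Suc j")
    case True then show ?thesis using aincr less.prems by auto
  next
    case False
    then have "j < k - 1" "k - 1 < k" using less.prems by auto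
    then have "a j < a (k - 1)" using less.IH[of "k - 1"] less.prems by auto
    moreover have "k - 1 \<in> {1..<n}" using less.prems False by auto
    then have "a (k - 1) < a (Suc (k - 1))" using aincr by blast
    ultimately show ?thesis using less.prems by simp
  qed
qed

lemma swap_lt:
  fixes lam :: "real \<Rightarrow> real" and a :: "nat \<Rightarrow> real"
  assumes lam_nonneg: "\<forall>t\<ge>0. 0 \<le> lam t"
    and lam_int: "\<forall>t\<ge>0. lam integrable_on {0..t}"
    and apos: "\<forall>i\<in>{1..n}. 0 < a i" and perm: "\<pi> permutes {1..n}"
    and i: "1 \<le> i" "i < n"
    and H: "(a (\<pi> (Suc i)) < a (\<pi> i) \<and> (\<forall>x\<in>{0..Apre a id n}. \<forall>y\<in>{0..Apre a id n}. x < y \<longrightarrow> pdens lam y < pdens lam x))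
          \<or> (a (\<pi> i) < a (\<pi> (Suc i)) \<and> (\<forall>x\<in>{0..Apre a id n}. \<forall>y\<in>{0..Apre a id n}. x < y \<longrightarrow> pdens lam x < pdens lam y))"
  shows "Sf a (sw \<pi> i) n (\<lambda>x. integral {0..x} (pdens lam)) < Sf a \<pi> n (\<lambda>x. integral {0..x} (pdens lam))"
proof -
  define P where "P = pdens lam"
  define F where "F x = integral {0..x} P" for x
  define t where "t = Apre a \<pi> (i - 1)"
  define x where "x = a (\<pi> i)"
  define y where "y = a (\<pi> (Suc i))"
  have t0: "0 \<le> t" using Apre_nonneg[OF apos perm, of "i - 1"] i by (simp add: t_def)
  have x0: "0 < x" and y0: "0 < y" using api[OF apos perm, of i] api[OF apos perm, of "Suc i"] i
    by (auto simp: x_def y_def)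
  have Ai: "Apre a \<pi> i = t + x" using Apre_Suc[of a \<pi> "i - 1"] i by (simp add: t_def x_def)
  have ASi: "Apre a \<pi> (Suc i) = t + x + y" using Apre_Suc[of a \<pi> i] Ai by (simp add: y_def)
  have Tle: "t + x + y \<le> Apre a id n"
    using Apre_mono[OF apos perm, of "Suc i" n] Apre_n[OF apos perm] ASi i by simp
  have Pint: "P integrable_on {u..v}" if "0 \<le> u" for u v
    unfolding P_def using P_int[OF lam_nonneg lam_int that] .
  have comb: "F w - F v = integral {v..w} P" if "0 \<le> v" "v \<le> w" for v w
    using Henstock_Kurzweil_Integration.integral_combine[where a=0 and c=v and b=w and f=P] that Pint[of 0 w]
    by (simp add: F_def)
  have key: "x * integral {t + x..t + x + y} P < y * integral {t + y..t + x + y} P"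
    using H unfolding x_def[symmetric] y_def[symmetric]
  proof
    assume h: "y < x \<and> (\<forall>x\<in>{0..Apre a id n}. \<forall>y\<in>{0..Apre a id n}. x < y \<longrightarrow> pdens lam y < pdens lam x)"
    have "((t + x + y) - (t + y)) * integral {t + x..t + x + y} P < ((t + x + y) - (t + x)) * integral {t + y..t + x + y} P"
    proof (rule avg)
      show "t + y < t + x" "t + x < t + x + y" using h y0 by auto
      show "P integrable_on {t + y..t + x + y}" using Pint t0 y0 by simp
      show "\<forall>xa\<in>{t + y..t + x + y}. \<forall>ya\<in>{t + y..t + x + y}. xa < ya \<longrightarrow> P ya < P xa"
        using h t0 y0 Tle unfolding P_def by auto
    qed
    then show ?thesis by simp
  next
    assume h: "x < y \<and> (\<forall>x\<in>{0..Apre a id n}. \<forall>y\<in>{0..Apre a id n}. x < y \<longrightarrow> pdens lam x < pdens lam y)"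
    have "((t + x + y) - (t + x)) * integral {t + y..t + x + y} (\<lambda>s. - P s) < ((t + x + y) - (t + y)) * integral {t + x..t + x + y} (\<lambda>s. - P s)"
    proof (rule avg)
      show "t + x < t + y" "t + y < t + x + y" using h x0 by auto
      show "(\<lambda>s. - P s) integrable_on {t + x..t + x + y}" using Pint t0 x0 by (simp add: integrable_neg)
      show "\<forall>xa\<in>{t + x..t + x + y}. \<forall>ya\<in>{t + x..t + x + y}. xa < ya \<longrightarrow> - P ya < - P xa"
        using h t0 x0 Tle unfolding P_def by auto
    qed
    then show ?thesis by simp
  qed
  have "Sf a (sw \<pi> i) n F - Sf a \<pi> n F = y * F (t + y) + x * F (t + x + y) - x * F (t + x) - y * F (t + x + y)"
    using Sf_sw[OF i, of a \<pi> F] Ai ASi by (simp add: t_def x_def y_def)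
  also have "\<dots> = x * (F (t + x + y) - F (t + x)) - y * (F (t + x + y) - F (t + y))"
    by (simp add: algebra_simps)
  also have "\<dots> = x * integral {t + x..t + x + y} P - y * integral {t + y..t + x + y} P"
    using t0 x0 y0 by (subst (1 2) comb) auto
  finally have "Sf a (sw \<pi> i) n F < Sf a \<pi> n F" using key by simp
  moreover have "F = (\<lambda>x. integral {0..x} (pdens lam))" by (simp add: F_def P_def fun_eq_iff)
  ultimately show ?thesis by simp
qed


lemma mu_bound:
  fixes \<pi> :: "nat \<Rightarrow> nat" and n :: nat
  assumes "\<pi> permutes {1..n}"
  shows "(\<Sum>j=1..n. j * \<pi> j) \<le> n * n * n"
proof -
  have "(\<Sum>j=1..n. j * \<pi> j) \<le> of_nat (card {1..n}) * (n * n)"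
  proof (rule sum_bounded_above)
    fix j assume j: "j \<in> {1..n}"
    then have "\<pi> j \<le> n" using permutes_in_image[OF assms] by auto
    then show "j * \<pi> j \<le> n * n" using j by (intro mult_le_mono) auto
  qed
  then show ?thesis by simp
qed

lemma nat_aux:
  fixes S S' i x q :: nat
  assumes "S' + i * x + Suc i * q = S + i * q + Suc i * x" "q < x"
  shows "S < S'"
proof -
  have "S' + q = S + x" using assms(1) by simp
  then show ?thesis using assms(2) by linarith
qed

lemma mu_swap_gt:
  fixes \<pi> :: "nat \<Rightarrow> nat" and n :: nat
  assumes i: "1 \<le> i" "i < n" and lt: "\<pi> (Suc i) < \<pi> i"
  shows "(\<Sum>j=1..n. j * \<pi> j) < (\<Sum>j=1..n. j * sw \<pi> i j)"
  using nat_aux[OF mu_sw[OF i, of \<pi>] lt] .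

lemma mu_swap_lt:
  fixes \<pi> :: "nat \<Rightarrow> nat" and n :: nat
  assumes i: "1 \<le> i" "i < n" and lt: "\<pi> i < \<pi> (Suc i)"
  shows "(\<Sum>j=1..n. j * sw \<pi> i j) < (\<Sum>j=1..n. j * \<pi> j)"
proof -
  have "(\<Sum>j=1..n. j * \<pi> j) + i * \<pi> (Suc i) + Suc i * \<pi> i = (\<Sum>j=1..n. j * sw \<pi> i j) + i * \<pi> i + Suc i * \<pi> (Suc i)"
    using mu_sw[OF i, of \<pi>] by simp
  from nat_aux[OF this lt] show ?thesis .
qed

theorem theorem4:
  fixes a :: "nat \<Rightarrow> real" and n :: nat and lam :: "real \<Rightarrow> real"
  assumes apos: "\<forall>i\<in>{1..n}. 0 < a i"
    and aincr: "\<forall>i\<in>{1..<n}. a i < a (Suc i)"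
    and lam_nonneg: "\<forall>t\<ge>0. 0 \<le> lam t"
    and lam_int: "\<forall>t\<ge>0. lam integrable_on {0..t}"
  shows "(\<forall>\<pi>. \<pi> permutes {1..n} \<longrightarrow>
            Rexp a id n (pdens lam) - Rexp a \<pi> n (pdens lam) =
            (\<Sum>i=1..n. a i * integral {0..Apre a id i} (pdens lam)
                      - a (\<pi> i) * integral {0..Apre a \<pi> i} (pdens lam)))
       \<and> ((\<forall>x\<in>{0..Apre a id n}. \<forall>y\<in>{0..Apre a id n}. x < y \<longrightarrow> pdens lam y < pdens lam x)
          \<longrightarrow> (\<forall>\<pi>. \<pi> permutes {1..n} \<and> \<pi> \<noteq> id \<longrightarrow>
                  Rexp a id n (pdens lam) < Rexp a \<pi> n (pdens lam)))
       \<and> ((\<forall>x\<in>{0..Apre a id n}. \<forall>y\<in>{0..Apre a id n}. x < y \<longrightarrow> pdens lam x < pdens lam y)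
          \<longrightarrow> (\<forall>\<pi>. \<pi> permutes {1..n} \<and> \<pi> \<noteq> lpt n \<longrightarrow>
                  Rexp a (lpt n) n (pdens lam) < Rexp a \<pi> n (pdens lam)))"
proof -
  define F where "F = (\<lambda>x. integral {0..x} (pdens lam))"
  define K where "K = integral {0..Apre a id n} (\<lambda>s. s * pdens lam s) + Apre a id n
      - Apre a id n * integral {0..Apre a id n} (pdens lam)"
  have R: "Rexp a \<pi> n (pdens lam) = K + Sf a \<pi> n F" if "\<pi> permutes {1..n}" for \<pi>
  proof -
    have "Rexp a \<pi> n (pdens lam) = integral {0..Apre a id n} (\<lambda>s. s * pdens lam s) + Apre a id n
      - Apre a id n * integral {0..Apre a id n} (pdens lam)
      + (\<Sum>i=1..n. a (\<pi> i) * integral {0..Apre a \<pi> i} (pdens lam))"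
    proof (rule Rexp_formula[OF apos that])
      show "pdens lam integrable_on {0..}" by (rule P_int_inf[OF lam_nonneg lam_int])
      show "pdens lam integrable_on {u..v}" if "0 \<le> u" for u v
        by (rule P_int[OF lam_nonneg lam_int that])
      show "(\<lambda>s. s * pdens lam s) integrable_on {u..v}" if "0 \<le> u" for u v
        by (rule P_int_gen[OF lam_nonneg lam_int that]) (intro continuous_intros)
    qed
    then show ?thesis by (simp add: K_def Sf_def F_def)
  qed
  have idp: "id permutes {1..n}" by (rule permutes_id)
  have part1: "\<forall>\<pi>. \<pi> permutes {1..n} \<longrightarrow>
            Rexp a id n (pdens lam) - Rexp a \<pi> n (pdens lam) =
            (\<Sum>i=1..n. a i * integral {0..Apre a id i} (pdens lam)
                      - a (\<pi> i) * integral {0..Apre a \<pi> i} (pdens lam))"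
  proof (intro allI impI)
    fix \<pi> assume perm: "\<pi> permutes {1..n}"
    have "Rexp a id n (pdens lam) - Rexp a \<pi> n (pdens lam) = Sf a id n F - Sf a \<pi> n F"
      using R[OF idp] R[OF perm] by simp
    also have "\<dots> = (\<Sum>i=1..n. a i * integral {0..Apre a id i} (pdens lam)
                      - a (\<pi> i) * integral {0..Apre a \<pi> i} (pdens lam))"
      unfolding Sf_def F_def by (simp add: sum_subtractf)
    finally show "Rexp a id n (pdens lam) - Rexp a \<pi> n (pdens lam) = (\<Sum>i=1..n. a i * integral {0..Apre a id i} (pdens lam)
                      - a (\<pi> i) * integral {0..Apre a \<pi> i} (pdens lam))" .
  qed
  have amono: "\<And>j k. 1 \<le> j \<Longrightarrow> j < k \<Longrightarrow> k \<le> n \<Longrightarrow> a j < a k"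
    using a_mono[OF aincr] by blast
  have inr: "1 \<le> \<pi> j \<and> \<pi> j \<le> n" if "\<pi> permutes {1..n}" "1 \<le> j" "j \<le> n" for \<pi> j
    using permutes_in_image[OF that(1)] that by auto
  have part2: "(\<forall>x\<in>{0..Apre a id n}. \<forall>y\<in>{0..Apre a id n}. x < y \<longrightarrow> pdens lam y < pdens lam x)
          \<longrightarrow> (\<forall>\<pi>. \<pi> permutes {1..n} \<and> \<pi> \<noteq> id \<longrightarrow>
                  Rexp a id n (pdens lam) < Rexp a \<pi> n (pdens lam))"
  proof (intro impI allI, elim conjE)
    fix \<pi> assume dec: "\<forall>x\<in>{0..Apre a id n}. \<forall>y\<in>{0..Apre a id n}. x < y \<longrightarrow> pdens lam y < pdens lam x"
      and perm: "\<pi> permutes {1..n}" and ne: "\<pi> \<noteq> id"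
    have "Sf a id n F < Sf a \<pi> n F"
    proof (rule descent[where m="\<lambda>\<pi>. n * n * n - (\<Sum>j=1..n. j * \<pi> j)" and S="\<lambda>\<pi>. Sf a \<pi> n F" and \<sigma>=id and A="{1..n}"])
      fix \<rho> assume perm: "\<rho> permutes {1..n}" and ne: "\<rho> \<noteq> id"
      have "\<not> (\<forall>i. 1 \<le> i \<and> i < n \<longrightarrow> \<rho> i < \<rho> (Suc i))"
      proof
        assume h: "\<forall>i. 1 \<le> i \<and> i < n \<longrightarrow> \<rho> i < \<rho> (Suc i)"
        have "\<rho> = id" by (rule ascending_id[OF perm]) (use h in auto)
        then show False using ne by simp
      qed
      then obtain i where i: "1 \<le> i" "i < n" and lt: "\<not> \<rho> i < \<rho> (Suc i)"
        by auto
      have "\<rho> i \<noteq> \<rho> (Suc i)" by (metis permutes_inj[OF perm] injD n_not_Suc_n)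
      then have lt: "\<rho> (Suc i) < \<rho> i" using lt by simp
      have alt: "a (\<rho> (Suc i)) < a (\<rho> i)"
        using amono[OF _ lt] inr[OF perm, of i] inr[OF perm, of "Suc i"] i by auto
      show "\<exists>\<pi>'. \<pi>' permutes {1..n} \<and> n * n * n - (\<Sum>j=1..n. j * \<pi>' j) < n * n * n - (\<Sum>j=1..n. j * \<rho> j)
              \<and> Sf a \<pi>' n F < Sf a \<rho> n F"
      proof (intro exI conjI)
        show "sw \<rho> i permutes {1..n}" by (rule sw_perm[OF i perm])
        show "n * n * n - (\<Sum>j=1..n. j * sw \<rho> i j) < n * n * n - (\<Sum>j=1..n. j * \<rho> j)"
          using mu_swap_gt[OF i lt] mu_bound[OF sw_perm[OF i perm]] by linarith
        show "Sf a (sw \<rho> i) n F < Sf a \<rho> n F"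
          unfolding F_def by (rule swap_lt[OF lam_nonneg lam_int apos perm i]) (use alt dec in blast)
      qed
    qed (use perm ne in auto)
    then show "Rexp a id n (pdens lam) < Rexp a \<pi> n (pdens lam)" using R[OF idp] R[OF perm] by simp
  qed
  have part3: "(\<forall>x\<in>{0..Apre a id n}. \<forall>y\<in>{0..Apre a id n}. x < y \<longrightarrow> pdens lam x < pdens lam y)
          \<longrightarrow> (\<forall>\<pi>. \<pi> permutes {1..n} \<and> \<pi> \<noteq> lpt n \<longrightarrow>
                  Rexp a (lpt n) n (pdens lam) < Rexp a \<pi> n (pdens lam))"
  proof (intro impI allI, elim conjE)
    fix \<pi> assume inc: "\<forall>x\<in>{0..Apre a id n}. \<forall>y\<in>{0..Apre a id n}. x < y \<longrightarrow> pdens lam x < pdens lam y"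
      and perm: "\<pi> permutes {1..n}" and ne: "\<pi> \<noteq> lpt n"
    have "Sf a (lpt n) n F < Sf a \<pi> n F"
    proof (rule descent[where m="\<lambda>\<pi>. (\<Sum>j=1..n. j * \<pi> j)" and S="\<lambda>\<pi>. Sf a \<pi> n F" and \<sigma>="lpt n" and A="{1..n}"])
      fix \<rho> assume perm: "\<rho> permutes {1..n}" and ne: "\<rho> \<noteq> lpt n"
      have "\<not> (\<forall>i. 1 \<le> i \<and> i < n \<longrightarrow> \<rho> (Suc i) < \<rho> i)"
      proof
        assume h: "\<forall>i. 1 \<le> i \<and> i < n \<longrightarrow> \<rho> (Suc i) < \<rho> i"
        have "\<rho> = lpt n" by (rule descending_lpt[OF perm]) (use h in auto)
        then show False using ne by simp
      qed
      then obtain i where i: "1 \<le> i" "i < n" and lt: "\<not> \<rho> (Suc i) < \<rho> i"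
        by auto
      have "\<rho> i \<noteq> \<rho> (Suc i)" by (metis permutes_inj[OF perm] injD n_not_Suc_n)
      then have lt: "\<rho> i < \<rho> (Suc i)" using lt by simp
      have alt: "a (\<rho> i) < a (\<rho> (Suc i))"
        using amono[OF _ lt] inr[OF perm, of i] inr[OF perm, of "Suc i"] i by auto
      show "\<exists>\<pi>'. \<pi>' permutes {1..n} \<and> (\<Sum>j=1..n. j * \<pi>' j) < (\<Sum>j=1..n. j * \<rho> j)
              \<and> Sf a \<pi>' n F < Sf a \<rho> n F"
      proof (intro exI conjI)
        show "sw \<rho> i permutes {1..n}" by (rule sw_perm[OF i perm])
        show "(\<Sum>j=1..n. j * sw \<rho> i j) < (\<Sum>j=1..n. j * \<rho> j)"
          using mu_swap_lt[OF i lt] .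
        show "Sf a (sw \<rho> i) n F < Sf a \<rho> n F"
          unfolding F_def by (rule swap_lt[OF lam_nonneg lam_int apos perm i]) (use alt inc in blast)
      qed
    qed (use perm ne in auto)
    then show "Rexp a (lpt n) n (pdens lam) < Rexp a \<pi> n (pdens lam)" using R[OF lpt_perm] R[OF perm] by simp
  qed
  show ?thesis by (intro conjI part1 part2 part3)
qed

end
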